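(* Let $\Lambda_1,\Lambda_2$ be bivariate tail dependence functions and, for $i=1,2$, let $C_i=C^{LEV}(\cdot\,;\Lambda_i)$ be the corresponding lower extreme value copulas, with survival copulas $\widehat C_i=C^{EV}(\cdot\,;\Lambda_i)$. Then the following are equivalent: (i) $\Lambda(\boldsymbol w;C_1)\le\Lambda(\boldsymbol w;C_2)$ for all $\boldsymbol w\in[0,\infty)^2$; (ii) $\widehat C_1(\boldsymbol u)\le\widehat C_2(\boldsymbol u)$ for all $\boldsymbol u\in[0,1]^2$; (iii) $C_1(\boldsymbol u)\le C_2(\boldsymbol u)$ for all $\boldsymbol u\in[0,1]^2$; (iv) $C_1\le_{loc}C_2$.
   Context: A 2-copula is a grounded, 2-increasing function $C:[0,1]^2\to[0,1]$ with uniform margins. Its tail dependence function is $\Lambda(\boldsymbol w;C)=\lim_{s\searrow0}C(s\boldsymbol w)/s$, $\boldsymbol w\in[0,\infty)^2$. A bivariate tail dependence function is a function $\Lambda:[0,\infty)^2\to[0,\infty)$ that is the tail dependence function of some 2-copula; equivalently, $\Lambda(w_1,w_2)=(w_1+w_2)A(w_1/(w_1+w_2))$ (and $\Lambda(0,0)=0$) for a concave $A:[0,1]\to[0,1/2]$ with $0\le A(t)\le\min\{t,1-t\}$. The extreme value copula is $C^{EV}(u_1,u_2;\Lambda)=\exp(\log u_1+\log u_2+\Lambda(-\log u_1,-\log u_2))$, and the lower extreme value copula is its survival copula $C^{LEV}(u_1,u_2;\Lambda)=u_1+u_2-1+C^{EV}(1-u_1,1-u_2;\Lambda)$; it satisfies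 $\Lambda(\cdot\,;C^{LEV}(\cdot;\Lambda))=\Lambda$. $C_1\le_{loc}C_2$ means there is $\varepsilon>0$ with $C_1\le C_2$ on $B_\varepsilon(\boldsymbol 0)\cap[0,1]^2$ (Euclidean ball). *)

theory Defs
  imports "HOL-Analysis.Analysis"
begin

text \<open>A 2-copula, represented as a function of two real arguments; only its values
on the unit square matter.\<close>
definition copula2 :: "(real \<Rightarrow> real \<Rightarrow> real) \<Rightarrow> bool" where
  "copula2 C \<longleftrightarrow>
     (\<forall>u1\<in>{0..1}. \<forall>u2\<in>{0..1}. C u1 u2 \<in> {0..1}) \<and>
     (\<forall>u\<in>{0..1}. C 0 u = 0 \<and> C u 0 = 0) \<and>
     (\<forall>u\<in>{0..1}. C u 1 = u \<and> C 1 u = u) \<and>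
     (\<forall>u1\<in>{0..1}. \<forall>v1\<in>{0..1}. \<forall>u2\<in>{0..1}. \<forall>v2\<in>{0..1}.
        u1 \<le> v1 \<longrightarrow> u2 \<le> v2 \<longrightarrow> C v1 v2 - C u1 v2 - C v1 u2 + C u1 u2 \<ge> 0)"

definition tail_dep :: "(real \<Rightarrow> real \<Rightarrow> real) \<Rightarrow> real \<Rightarrow> real \<Rightarrow> real" where
  "tail_dep C w1 w2 = Lim (at_right 0) (\<lambda>s. C (s * w1) (s * w2) / s)"

definition is_btdf :: "(real \<Rightarrow> real \<Rightarrow> real) \<Rightarrow> bool" where
  "is_btdf L \<longleftrightarrow> (\<exists>C. copula2 C \<and>
     (\<forall>w1\<ge>0. \<forall>w2\<ge>0. ((\<lambda>s. C (s * w1) (s * w2) / s) \<longlongrightarrow> L w1 w2) (at_right 0)))"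

text \<open>Extreme value copula, continuously extended by 0 when an argument is 0.\<close>
definition CEV :: "(real \<Rightarrow> real \<Rightarrow> real) \<Rightarrow> real \<Rightarrow> real \<Rightarrow> real" where
  "CEV L u1 u2 = (if u1 = 0 \<or> u2 = 0 then 0
      else exp (ln u1 + ln u2 + L (- ln u1) (- ln u2)))"

text \<open>Lower extreme value copula (survival copula of the extreme value copula).\<close>
definition CLEV :: "(real \<Rightarrow> real \<Rightarrow> real) \<Rightarrow> real \<Rightarrow> real \<Rightarrow> real" where
  "CLEV L u1 u2 = u1 + u2 - 1 + CEV L (1 - u1) (1 - u2)"

definition le_loc :: "(real \<Rightarrow> real \<Rightarrow> real) \<Rightarrow> (real \<Rightarrow> real \<Rightarrow> real) \<Rightarrow> bool" where
  "le_loc C1 C2 \<longleftrightarrow> (\<exists>\<epsilon>>0. \<forall>u1\<in>{0..1}. \<forall>u2\<in>{0..1}.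
       (u1, u2) \<in> ball (0, 0) \<epsilon> \<longrightarrow> C1 u1 u2 \<le> C2 u1 u2)"

end

theory Submission
  imports Defs
begin

lemma cop_lip1:
  assumes C: "copula2 C" and u: "u \<in> {0..1}" and v: "v \<in> {0..1}" and z: "z \<in> {0..1}"
  shows "\<bar>C u z - C v z\<bar> \<le> \<bar>u - v\<bar>"
proof -
  have inc: "\<And>u1 v1 u2 v2. u1\<in>{0..1} \<Longrightarrow> v1\<in>{0..1} \<Longrightarrow> u2\<in>{0..1} \<Longrightarrow> v2\<in>{0..1} \<Longrightarrow>
     u1 \<le> v1 \<Longrightarrow> u2 \<le> v2 \<Longrightarrow> C v1 v2 - C u1 v2 - C v1 u2 + C u1 u2 \<ge> 0"
    using C unfolding copula2_def by blast
  have m: "\<And>x. x\<in>{0..1} \<Longrightarrow> C 0 x = 0 \<and> C x 0 = 0 \<and> C x 1 = x \<and> C 1 x = x"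
    using C unfolding copula2_def by blast
  have key: "\<And>a b. a \<in> {0..1} \<Longrightarrow> b \<in> {0..1} \<Longrightarrow> a \<le> b \<Longrightarrow> 0 \<le> C b z - C a z \<and> C b z - C a z \<le> b - a"
  proof -
    fix a b :: real assume a: "a \<in> {0..1}" and b: "b \<in> {0..1}" and ab: "a \<le> b"
    have 1: "C b 1 - C a 1 - C b z + C a z \<ge> 0" using inc[OF a b z _ ab] z by auto
    have 2: "C b z - C a z - C b 0 + C a 0 \<ge> 0" using inc[OF a b _ z ab] z by auto
    show "0 \<le> C b z - C a z \<and> C b z - C a z \<le> b - a" using 1 2 m[OF a] m[OF b] by auto
  qed
  show ?thesis
  proof (cases "u \<le> v")
    case True then show ?thesis using key[OF u v] by auto
  next
    case False then show ?thesis using key[OF v u] by auto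
  qed
qed

lemma cop_lip2:
  assumes C: "copula2 C" and u: "u \<in> {0..1}" and v: "v \<in> {0..1}" and z: "z \<in> {0..1}"
  shows "\<bar>C z u - C z v\<bar> \<le> \<bar>u - v\<bar>"
proof -
  have inc: "\<And>u1 v1 u2 v2. u1\<in>{0..1} \<Longrightarrow> v1\<in>{0..1} \<Longrightarrow> u2\<in>{0..1} \<Longrightarrow> v2\<in>{0..1} \<Longrightarrow>
     u1 \<le> v1 \<Longrightarrow> u2 \<le> v2 \<Longrightarrow> C v1 v2 - C u1 v2 - C v1 u2 + C u1 u2 \<ge> 0"
    using C unfolding copula2_def by blast
  have m: "\<And>x. x\<in>{0..1} \<Longrightarrow> C 0 x = 0 \<and> C x 0 = 0 \<and> C x 1 = x \<and> C 1 x = x"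
    using C unfolding copula2_def by blast
  have key: "\<And>a b. a \<in> {0..1} \<Longrightarrow> b \<in> {0..1} \<Longrightarrow> a \<le> b \<Longrightarrow> 0 \<le> C z b - C z a \<and> C z b - C z a \<le> b - a"
  proof -
    fix a b :: real assume a: "a \<in> {0..1}" and b: "b \<in> {0..1}" and ab: "a \<le> b"
    have 1: "C 1 b - C z b - C 1 a + C z a \<ge> 0" using inc[OF z _ a b _ ab] z by auto
    have 2: "C z b - C 0 b - C z a + C 0 a \<ge> 0" using inc[OF _ z a b _ ab] z by auto
    show "0 \<le> C z b - C z a \<and> C z b - C z a \<le> b - a" using 1 2 m[OF a] m[OF b] by auto
  qed
  show ?thesis
  proof (cases "u \<le> v")
    case True then show ?thesis using key[OF u v] by auto
  next
    case False then show ?thesis using key[OF v u] by auto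
  qed
qed

lemma ev_small:
  fixes M :: real assumes "M \<ge> 0"
  shows "eventually (\<lambda>s. 0 < s \<and> s * M < 1/2) (at_right 0)"
proof -
  have "\<exists>b>0. \<forall>y>0. y < b \<longrightarrow> 0 < y \<and> y * M < 1/2"
  proof (intro exI[of _ "1/(2*(1+M))"] conjI allI impI)
    show "0 < 1/(2*(1+M))" using assms by simp
    fix y :: real assume y: "0 < y" "y < 1/(2*(1+M))"
    show "0 < y" using y by simp
    have "y * (2*(1+M)) < 1" using y assms by (simp add: field_simps)
    then have "2*y + 2*(y*M) < 1" by (simp add: algebra_simps)
    then show "y * M < 1/2" using y by linarith
  qed
  then show ?thesis by (simp add: eventually_at_right_field)
qed

lemma btdf_lip1:
  assumes L: "is_btdf L" and x: "x \<ge> 0" and x': "x' \<ge> 0" and y: "y \<ge> 0"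
  shows "\<bar>L x y - L x' y\<bar> \<le> \<bar>x - x'\<bar>"
proof -
  obtain C where C: "copula2 C" and lim: "\<And>w1 w2. w1 \<ge> 0 \<Longrightarrow> w2 \<ge> 0 \<Longrightarrow>
     ((\<lambda>s. C (s * w1) (s * w2) / s) \<longlongrightarrow> L w1 w2) (at_right 0)"
    using L unfolding is_btdf_def by blast
  have t: "((\<lambda>s. \<bar>C (s * x) (s * y) / s - C (s * x') (s * y) / s\<bar>) \<longlongrightarrow> \<bar>L x y - L x' y\<bar>) (at_right 0)"
    by (intro tendsto_intros lim x x' y)
  have ev: "eventually (\<lambda>s. \<bar>C (s * x) (s * y) / s - C (s * x') (s * y) / s\<bar> \<le> \<bar>x - x'\<bar>) (at_right 0)"
    using ev_small[OF add_nonneg_nonneg[OF add_nonneg_nonneg[OF x x'] y]]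
  proof (elim eventually_mono)
    fix s :: real assume s0: "0 < s \<and> s * (x + x' + y) < 1/2"
    then have s: "0 < s" "s * x + s * x' + s * y < 1/2" by (auto simp: distrib_left)
    have nn: "0 \<le> s * x" "0 \<le> s * x'" "0 \<le> s * y" using s x x' y by auto
    have a: "s * x \<in> {0..1}" "s * x' \<in> {0..1}" "s * y \<in> {0..1}"
      using s(2) nn by auto
    have "\<bar>C (s * x) (s * y) - C (s * x') (s * y)\<bar> \<le> \<bar>s * x - s * x'\<bar>"
      by (rule cop_lip1[OF C a])
    also have "\<dots> = s * \<bar>x - x'\<bar>" using s by (simp add: abs_mult flip: right_diff_distrib)
    finally have "\<bar>C (s * x) (s * y) - C (s * x') (s * y)\<bar> / s \<le> \<bar>x - x'\<bar>"
      using s by (simp add: divide_le_eq mult.commute)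
    then show "\<bar>C (s * x) (s * y) / s - C (s * x') (s * y) / s\<bar> \<le> \<bar>x - x'\<bar>"
      using s by (simp add: diff_divide_distrib[symmetric])
  qed
  show ?thesis using tendsto_le[OF trivial_limit_at_right_real tendsto_const t ev] .
qed

lemma btdf_lip2:
  assumes L: "is_btdf L" and x: "x \<ge> 0" and x': "x' \<ge> 0" and y: "y \<ge> 0"
  shows "\<bar>L y x - L y x'\<bar> \<le> \<bar>x - x'\<bar>"
proof -
  obtain C where C: "copula2 C" and lim: "\<And>w1 w2. w1 \<ge> 0 \<Longrightarrow> w2 \<ge> 0 \<Longrightarrow>
     ((\<lambda>s. C (s * w1) (s * w2) / s) \<longlongrightarrow> L w1 w2) (at_right 0)"
    using L unfolding is_btdf_def by blast
  have t: "((\<lambda>s. \<bar>C (s * y) (s * x) / s - C (s * y) (s * x') / s\<bar>) \<longlongrightarrow> \<bar>L y x - L y x'\<bar>) (at_right 0)"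
    by (intro tendsto_intros lim x x' y)
  have ev: "eventually (\<lambda>s. \<bar>C (s * y) (s * x) / s - C (s * y) (s * x') / s\<bar> \<le> \<bar>x - x'\<bar>) (at_right 0)"
    using ev_small[OF add_nonneg_nonneg[OF add_nonneg_nonneg[OF x x'] y]]
  proof (elim eventually_mono)
    fix s :: real assume s0: "0 < s \<and> s * (x + x' + y) < 1/2"
    then have s: "0 < s" "s * x + s * x' + s * y < 1/2" by (auto simp: distrib_left)
    have nn: "0 \<le> s * x" "0 \<le> s * x'" "0 \<le> s * y" using s x x' y by auto
    have a: "s * x \<in> {0..1}" "s * x' \<in> {0..1}" "s * y \<in> {0..1}"
      using s(2) nn by auto
    have "\<bar>C (s * y) (s * x) - C (s * y) (s * x')\<bar> \<le> \<bar>s * x - s * x'\<bar>"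
      by (rule cop_lip2[OF C a])
    also have "\<dots> = s * \<bar>x - x'\<bar>" using s by (simp add: abs_mult flip: right_diff_distrib)
    finally have "\<bar>C (s * y) (s * x) - C (s * y) (s * x')\<bar> / s \<le> \<bar>x - x'\<bar>"
      using s by (simp add: divide_le_eq mult.commute)
    then show "\<bar>C (s * y) (s * x) / s - C (s * y) (s * x') / s\<bar> \<le> \<bar>x - x'\<bar>"
      using s by (simp add: diff_divide_distrib[symmetric])
  qed
  show ?thesis using tendsto_le[OF trivial_limit_at_right_real tendsto_const t ev] .
qed

lemma btdf_lip:
  assumes L: "is_btdf L" and "x \<ge> 0" "x' \<ge> 0" "y \<ge> 0" "y' \<ge> 0"
  shows "\<bar>L x y - L x' y'\<bar> \<le> \<bar>x - x'\<bar> + \<bar>y - y'\<bar>"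
  using btdf_lip1[OF L, of x x' y] btdf_lip2[OF L, of y y' x'] assms by linarith

lemma btdf_hom:
  assumes L: "is_btdf L" and t: "t > 0" and w1: "w1 \<ge> 0" and w2: "w2 \<ge> 0"
  shows "L (t * w1) (t * w2) = t * L w1 w2"
proof -
  obtain C where C: "copula2 C" and lim: "\<And>w1 w2. w1 \<ge> 0 \<Longrightarrow> w2 \<ge> 0 \<Longrightarrow>
     ((\<lambda>s. C (s * w1) (s * w2) / s) \<longlongrightarrow> L w1 w2) (at_right 0)"
    using L unfolding is_btdf_def by blast
  have f: "filterlim (\<lambda>s. s * t) (at_right 0) (at_right 0)"
    unfolding filterlim_at
  proof
    show "\<forall>\<^sub>F x in at_right 0. x * t \<in> {0<..} \<and> x * t \<noteq> 0"
      using eventually_at_right_less[of 0] by (rule eventually_mono) (use t in auto)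
    show "((\<lambda>s. s * t) \<longlongrightarrow> 0) (at_right 0)"
      by (rule tendsto_eq_intros) (auto intro: tendsto_ident_at)
  qed
  have h: "((\<lambda>s. C ((s*t) * w1) ((s*t) * w2) / (s*t)) \<longlongrightarrow> L w1 w2) (at_right 0)"
    using filterlim_compose[OF lim[OF w1 w2] f] by simp
  have "((\<lambda>s. t * (C ((s*t) * w1) ((s*t) * w2) / (s*t))) \<longlongrightarrow> t * L w1 w2) (at_right 0)"
    by (intro tendsto_intros h)
  moreover have "(\<lambda>s. t * (C ((s*t) * w1) ((s*t) * w2) / (s*t))) = (\<lambda>s. C (s * (t * w1)) (s * (t*w2)) / s)"
    using t by (auto simp: fun_eq_iff mult.assoc mult.commute[of t])
  ultimately have "((\<lambda>s. C (s * (t * w1)) (s * (t*w2)) / s) \<longlongrightarrow> t * L w1 w2) (at_right 0)" by simp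
  moreover have "((\<lambda>s. C (s * (t * w1)) (s * (t*w2)) / s) \<longlongrightarrow> L (t * w1) (t * w2)) (at_right 0)"
    using lim t w1 w2 by simp
  ultimately show ?thesis using tendsto_unique[OF trivial_limit_at_right_real] by blast
qed

lemma btdf_00: assumes L: "is_btdf L" shows "L 0 0 = 0"
  using btdf_hom[OF L, of 2 0 0] by simp


lemma ln_quot:
  fixes w :: real
  shows "((\<lambda>s. - ln (1 - s*w) / s) \<longlongrightarrow> w) (at_right 0)"
proof -
  have d: "((\<lambda>s. - ln (1 - s*w)) has_real_derivative w) (at 0)"
    by (auto intro!: derivative_eq_intros)
  have "((\<lambda>y. (- ln (1 - y*w) - (- ln (1 - 0*w))) / (y - 0)) \<longlongrightarrow> w) (at 0)"
    using d[unfolded has_field_derivative_iff] .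
  then have "((\<lambda>s. - ln (1 - s*w) / s) \<longlongrightarrow> w) (at 0)" by simp
  then show ?thesis by (rule tendsto_mono[OF at_le, rotated]) simp
qed

definition EE :: "real \<Rightarrow> real" where
  "EE t = (if t = 0 then 1 else (exp t - 1) / t)"

lemma EE_cont: "isCont EE 0"
proof -
  have d: "(exp has_real_derivative 1) (at 0)"
    using DERIV_exp[of 0] by simp
  have "((\<lambda>y::real. (exp y - 1) / y) \<longlongrightarrow> 1) (at 0)"
    using d[unfolded has_field_derivative_iff] by simp
  then have "(EE \<longlongrightarrow> 1) (at 0)"
    by (subst LIM_equal[where g="\<lambda>y. (exp y - 1) / y"]) (auto simp: EE_def)
  then show ?thesis unfolding isCont_def by (simp add: EE_def)
qed

lemma EE_eq: "exp t - 1 = EE t * t"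
  by (auto simp: EE_def)

lemma clev_lim:
  assumes L: "is_btdf L" and w1: "w1 \<ge> 0" and w2: "w2 \<ge> 0"
  shows "((\<lambda>s. CLEV L (s*w1) (s*w2) / s) \<longlongrightarrow> L w1 w2) (at_right 0)"
proof -
  define a where "a s = - ln (1 - s*w1)" for s
  define b where "b s = - ln (1 - s*w2)" for s
  have A1: "((\<lambda>s. a s / s) \<longlongrightarrow> w1) (at_right 0)" unfolding a_def by (rule ln_quot)
  have B1: "((\<lambda>s. b s / s) \<longlongrightarrow> w2) (at_right 0)" unfolding b_def by (rule ln_quot)
  have EV: "eventually (\<lambda>s. 0 < s \<and> s * (w1 + w2) < 1/2) (at_right 0)"
    using ev_small[of "w1+w2"] w1 w2 by simp
  have good: "0 < s \<and> s * (w1 + w2) < 1/2 \<Longrightarrow> 0 < s \<and> 0 \<le> s*w1 \<and> 0 \<le> s*w2 \<and> s*w1 < 1 \<and> s*w2 < 1 \<and> 0 \<le> a s \<and> 0 \<le> b s" for s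
  proof -
    assume s0: "0 < s \<and> s * (w1 + w2) < 1/2"
    have n: "0 \<le> s*w1" "0 \<le> s*w2" using s0 w1 w2 by auto
    have l: "s*w1 < 1" "s*w2 < 1" using s0 n by (auto simp: distrib_left)
    have "ln (1 - s*w1) \<le> 0" "ln (1 - s*w2) \<le> 0" using n l by auto
    then show ?thesis using s0 n l by (auto simp: a_def b_def)
  qed
  have A2: "((\<lambda>s. L (a s) (b s) / s) \<longlongrightarrow> L w1 w2) (at_right 0)"
  proof -
    have g0: "((\<lambda>s. \<bar>a s / s - w1\<bar> + \<bar>b s / s - w2\<bar>) \<longlongrightarrow> 0) (at_right 0)"
    proof -
      have "((\<lambda>s. \<bar>a s / s - w1\<bar> + \<bar>b s / s - w2\<bar>) \<longlongrightarrow> \<bar>w1 - w1\<bar> + \<bar>w2 - w2\<bar>) (at_right 0)"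
        by (intro tendsto_intros A1 B1)
      then show ?thesis by simp
    qed
    have "((\<lambda>s. L (a s) (b s) / s - L w1 w2) \<longlongrightarrow> 0) (at_right 0)"
    proof (rule Lim_null_comparison[OF _ g0])
      show "\<forall>\<^sub>F s in at_right 0. norm (L (a s) (b s) / s - L w1 w2) \<le> \<bar>a s / s - w1\<bar> + \<bar>b s / s - w2\<bar>"
        using EV
      proof (elim eventually_mono)
        fix s assume "0 < s \<and> s * (w1 + w2) < 1/2"
        then have s: "0 < s" "0 \<le> s*w1" "0 \<le> s*w2" "0 \<le> a s" "0 \<le> b s" using good by blast+
        have h: "L (s*w1) (s*w2) = s * L w1 w2" using btdf_hom[OF L s(1) w1 w2] .
        have "\<bar>L (a s) (b s) - L (s*w1) (s*w2)\<bar> \<le> \<bar>a s - s*w1\<bar> + \<bar>b s - s*w2\<bar>"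
          using btdf_lip[OF L s(4) s(2) s(5) s(3)] .
        also have "\<dots> = s * (\<bar>a s / s - w1\<bar> + \<bar>b s / s - w2\<bar>)"
        proof -
          have "a s - s*w1 = s * (a s / s - w1)" "b s - s*w2 = s * (b s / s - w2)"
            using s(1) by (auto simp: field_simps)
          then show ?thesis using s(1) by (simp add: abs_mult distrib_left)
        qed
        finally have "\<bar>L (a s) (b s) - s * L w1 w2\<bar> / s \<le> \<bar>a s / s - w1\<bar> + \<bar>b s / s - w2\<bar>"
          using s(1) h by (simp add: divide_le_eq mult.commute)
        moreover have "\<bar>L (a s) (b s) - s * L w1 w2\<bar> / s = \<bar>L (a s) (b s) / s - L w1 w2\<bar>"
        proof -
          have "L (a s) (b s) / s - L w1 w2 = (L (a s) (b s) - s * L w1 w2) / s"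
            using s(1) by (simp add: diff_divide_distrib)
          then show ?thesis using s(1) by (simp add: abs_divide)
        qed
        ultimately show "norm (L (a s) (b s) / s - L w1 w2) \<le> \<bar>a s / s - w1\<bar> + \<bar>b s / s - w2\<bar>"
          by simp
      qed
    qed
    then show ?thesis by (simp add: LIM_zero_iff)
  qed
  define \<phi> where "\<phi> s = - a s - b s + L (a s) (b s)" for s
  define c where "c = - w1 - w2 + L w1 w2"
  have P1: "((\<lambda>s. \<phi> s / s) \<longlongrightarrow> c) (at_right 0)"
  proof -
    have "((\<lambda>s. - (a s / s) - b s / s + L (a s) (b s) / s) \<longlongrightarrow> c) (at_right 0)"
      unfolding c_def by (intro tendsto_intros A1 B1 A2)
    moreover have "(\<lambda>s. - (a s / s) - b s / s + L (a s) (b s) / s) = (\<lambda>s. \<phi> s / s)"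
      by (auto simp: fun_eq_iff \<phi>_def diff_divide_distrib add_divide_distrib)
    ultimately show ?thesis by simp
  qed
  have P0: "(\<phi> \<longlongrightarrow> 0) (at_right 0)"
  proof -
    have "((\<lambda>s. s * (\<phi> s / s)) \<longlongrightarrow> 0 * c) (at_right 0)"
      by (intro tendsto_intros P1)
    then have "((\<lambda>s. s * (\<phi> s / s)) \<longlongrightarrow> 0) (at_right 0)" by simp
    then show ?thesis
    proof (rule Lim_transform_eventually)
      show "\<forall>\<^sub>F s in at_right 0. s * (\<phi> s / s) = \<phi> s"
        using eventually_at_right_less[of "0::real"] by (rule eventually_mono) simp
    qed
  qed
  have P2: "((\<lambda>s. w1 + w2 + EE (\<phi> s) * (\<phi> s / s)) \<longlongrightarrow> w1 + w2 + EE 0 * c) (at_right 0)"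
    by (intro tendsto_intros P1 isCont_tendsto_compose[OF EE_cont P0])
  have "w1 + w2 + EE 0 * c = L w1 w2" by (simp add: EE_def c_def)
  with P2 have P3: "((\<lambda>s. w1 + w2 + EE (\<phi> s) * (\<phi> s / s)) \<longlongrightarrow> L w1 w2) (at_right 0)" by simp
  show ?thesis
  proof (rule Lim_transform_eventually[OF P3])
    show "\<forall>\<^sub>F s in at_right 0. w1 + w2 + EE (\<phi> s) * (\<phi> s / s) = CLEV L (s * w1) (s * w2) / s"
      using EV
    proof (elim eventually_mono)
      fix s assume "0 < s \<and> s * (w1 + w2) < 1/2"
      then have s: "0 < s" "s*w1 < 1" "s*w2 < 1" using good by blast+
      have "CEV L (1 - s*w1) (1 - s*w2) = exp (\<phi> s)"
        using s by (simp add: CEV_def \<phi>_def a_def b_def)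
      then have "CLEV L (s * w1) (s * w2) = s*w1 + s*w2 + EE (\<phi> s) * \<phi> s"
        using EE_eq[of "\<phi> s"] by (simp add: CLEV_def)
      then show "w1 + w2 + EE (\<phi> s) * (\<phi> s / s) = CLEV L (s * w1) (s * w2) / s"
        using s(1) by (simp add: field_simps)
    qed
  qed
qed

lemma tail_dep_clev:
  assumes L: "is_btdf L" and w1: "w1 \<ge> 0" and w2: "w2 \<ge> 0"
  shows "tail_dep (CLEV L) w1 w2 = L w1 w2"
  unfolding tail_dep_def using tendsto_Lim[OF trivial_limit_at_right_real clev_lim[OF assms]] .


lemma CEV_pos: "0 < u1 \<Longrightarrow> 0 < u2 \<Longrightarrow> CEV L u1 u2 = exp (ln u1 + ln u2 + L (- ln u1) (- ln u2))"
  by (simp add: CEV_def)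

lemma L_iff_CEV:
  shows "(\<forall>w1\<ge>0. \<forall>w2\<ge>0. L1 w1 w2 \<le> (L2 w1 w2::real))
     \<longleftrightarrow> (\<forall>u1\<in>{0..1}. \<forall>u2\<in>{0..1}. CEV L1 u1 u2 \<le> CEV L2 u1 u2)"
proof
  assume H: "\<forall>w1\<ge>0. \<forall>w2\<ge>0. L1 w1 w2 \<le> L2 w1 w2"
  show "\<forall>u1\<in>{0..1}. \<forall>u2\<in>{0..1}. CEV L1 u1 u2 \<le> CEV L2 u1 u2"
  proof (intro ballI)
    fix u1 u2 :: real assume u1: "u1 \<in> {0..1}" and u2: "u2 \<in> {0..1}"
    show "CEV L1 u1 u2 \<le> CEV L2 u1 u2"
    proof (cases "u1 = 0 \<or> u2 = 0")
      case True then show ?thesis by (auto simp: CEV_def)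
    next
      case False
      then have p: "0 < u1" "0 < u2" using u1 u2 by auto
      have "ln u1 \<le> 0" "ln u2 \<le> 0" using p u1 u2 by auto
      then have "L1 (- ln u1) (- ln u2) \<le> L2 (- ln u1) (- ln u2)" using H by auto
      then show ?thesis using p by (simp add: CEV_pos)
    qed
  qed
next
  assume H: "\<forall>u1\<in>{0..1}. \<forall>u2\<in>{0..1}. CEV L1 u1 u2 \<le> CEV L2 u1 u2"
  show "\<forall>w1\<ge>0. \<forall>w2\<ge>0. L1 w1 w2 \<le> L2 w1 w2"
  proof (intro allI impI)
    fix w1 w2 :: real assume w: "w1 \<ge> 0" "w2 \<ge> 0"
    have "exp (- w1) \<in> {0..1}" "exp (- w2) \<in> {0..1}" using w by auto
    then have "CEV L1 (exp (- w1)) (exp (- w2)) \<le> CEV L2 (exp (- w1)) (exp (- w2))" using H by blast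
    then show "L1 w1 w2 \<le> L2 w1 w2" by (simp add: CEV_pos)
  qed
qed

lemma CEV_iff_CLEV:
  shows "(\<forall>u1\<in>{0..1}. \<forall>u2\<in>{0..1}. CEV L1 u1 u2 \<le> CEV L2 u1 u2)
     \<longleftrightarrow> (\<forall>u1\<in>{0..1}. \<forall>u2\<in>{0..1}. CLEV L1 u1 u2 \<le> CLEV L2 u1 u2)"
proof
  assume H: "\<forall>u1\<in>{0..1}. \<forall>u2\<in>{0..1}. CEV L1 u1 u2 \<le> CEV L2 u1 u2"
  show "\<forall>u1\<in>{0..1}. \<forall>u2\<in>{0..1}. CLEV L1 u1 u2 \<le> CLEV L2 u1 u2"
  proof (intro ballI)
    fix u1 u2 :: real assume "u1 \<in> {0..1}" "u2 \<in> {0..1}"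
    then have "1 - u1 \<in> {0..1}" "1 - u2 \<in> {0..1}" by auto
    then show "CLEV L1 u1 u2 \<le> CLEV L2 u1 u2" using H by (auto simp: CLEV_def)
  qed
next
  assume H: "\<forall>u1\<in>{0..1}. \<forall>u2\<in>{0..1}. CLEV L1 u1 u2 \<le> CLEV L2 u1 u2"
  show "\<forall>u1\<in>{0..1}. \<forall>u2\<in>{0..1}. CEV L1 u1 u2 \<le> CEV L2 u1 u2"
  proof (intro ballI)
    fix u1 u2 :: real assume "u1 \<in> {0..1}" "u2 \<in> {0..1}"
    then have "1 - u1 \<in> {0..1}" "1 - u2 \<in> {0..1}" by auto
    then have "CLEV L1 (1 - u1) (1 - u2) \<le> CLEV L2 (1 - u1) (1 - u2)" using H by blast
    then show "CEV L1 u1 u2 \<le> CEV L2 u1 u2" by (simp add: CLEV_def)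
  qed
qed

lemma loc_imp_L:
  assumes L1: "is_btdf L1" and L2: "is_btdf L2" and loc: "le_loc (CLEV L1) (CLEV L2)"
  shows "\<forall>w1\<ge>0. \<forall>w2\<ge>0. L1 w1 w2 \<le> L2 w1 w2"
proof (intro allI impI)
  fix w1 w2 :: real assume w1: "w1 \<ge> 0" and w2: "w2 \<ge> 0"
  obtain \<epsilon> where e: "\<epsilon> > 0" and H: "\<forall>u1\<in>{0..1}. \<forall>u2\<in>{0..1}.
       (u1, u2) \<in> ball (0, 0) \<epsilon> \<longrightarrow> CLEV L1 u1 u2 \<le> CLEV L2 u1 u2"
    using loc unfolding le_loc_def by blast
  have tp: "((\<lambda>s. (s*w1, s*w2)) \<longlongrightarrow> (0*w1, 0*w2)) (at_right 0)"
    by (intro tendsto_intros tendsto_ident_at)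
  have eb: "eventually (\<lambda>s. (s*w1, s*w2) \<in> ball (0,0) \<epsilon>) (at_right 0)"
    by (rule topological_tendstoD[OF tp]) (use e in auto)
  have ev: "eventually (\<lambda>s. CLEV L1 (s*w1) (s*w2) / s \<le> CLEV L2 (s*w1) (s*w2) / s) (at_right 0)"
    using eventually_conj[OF eb ev_small[OF add_nonneg_nonneg[OF w1 w2]]]
  proof (elim eventually_mono)
    fix s assume s: "(s*w1, s*w2) \<in> ball (0,0) \<epsilon> \<and> 0 < s \<and> s * (w1 + w2) < 1/2"
    have n: "0 \<le> s*w1" "0 \<le> s*w2" using s w1 w2 by auto
    have "s*w1 \<in> {0..1}" "s*w2 \<in> {0..1}" using s n by (auto simp: distrib_left)
    then have "CLEV L1 (s*w1) (s*w2) \<le> CLEV L2 (s*w1) (s*w2)" using H s by blast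
    then show "CLEV L1 (s*w1) (s*w2) / s \<le> CLEV L2 (s*w1) (s*w2) / s"
      using s by (simp add: divide_right_mono)
  qed
  show "L1 w1 w2 \<le> L2 w1 w2"
    using tendsto_le[OF trivial_limit_at_right_real clev_lim[OF L2 w1 w2] clev_lim[OF L1 w1 w2] ev] .
qed

theorem mainTheorem9:
  fixes L1 L2 :: "real \<Rightarrow> real \<Rightarrow> real"
  assumes "is_btdf L1" and "is_btdf L2"
  shows "((\<forall>w1\<ge>0. \<forall>w2\<ge>0. tail_dep (CLEV L1) w1 w2 \<le> tail_dep (CLEV L2) w1 w2)
          \<longleftrightarrow> (\<forall>u1\<in>{0..1}. \<forall>u2\<in>{0..1}. CEV L1 u1 u2 \<le> CEV L2 u1 u2)) \<and>
         ((\<forall>u1\<in>{0..1}. \<forall>u2\<in>{0..1}. CEV L1 u1 u2 \<le> CEV L2 u1 u2)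
          \<longleftrightarrow> (\<forall>u1\<in>{0..1}. \<forall>u2\<in>{0..1}. CLEV L1 u1 u2 \<le> CLEV L2 u1 u2)) \<and>
         ((\<forall>u1\<in>{0..1}. \<forall>u2\<in>{0..1}. CLEV L1 u1 u2 \<le> CLEV L2 u1 u2)
          \<longleftrightarrow> le_loc (CLEV L1) (CLEV L2))"
proof (intro conjI)
  have T: "(\<forall>w1\<ge>0. \<forall>w2\<ge>0. tail_dep (CLEV L1) w1 w2 \<le> tail_dep (CLEV L2) w1 w2)
      \<longleftrightarrow> (\<forall>w1\<ge>0. \<forall>w2\<ge>0. L1 w1 w2 \<le> L2 w1 w2)"
    using tail_dep_clev[OF assms(1)] tail_dep_clev[OF assms(2)] by simp
  show "(\<forall>w1\<ge>0. \<forall>w2\<ge>0. tail_dep (CLEV L1) w1 w2 \<le> tail_dep (CLEV L2) w1 w2)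
          \<longleftrightarrow> (\<forall>u1\<in>{0..1}. \<forall>u2\<in>{0..1}. CEV L1 u1 u2 \<le> CEV L2 u1 u2)"
    using T L_iff_CEV[of L1 L2] by (rule trans)
  show "(\<forall>u1\<in>{0..1}. \<forall>u2\<in>{0..1}. CEV L1 u1 u2 \<le> CEV L2 u1 u2)
          \<longleftrightarrow> (\<forall>u1\<in>{0..1}. \<forall>u2\<in>{0..1}. CLEV L1 u1 u2 \<le> CLEV L2 u1 u2)"
    by (rule CEV_iff_CLEV)
  show "(\<forall>u1\<in>{0..1}. \<forall>u2\<in>{0..1}. CLEV L1 u1 u2 \<le> CLEV L2 u1 u2)
          \<longleftrightarrow> le_loc (CLEV L1) (CLEV L2)"
  proof
    assume "\<forall>u1\<in>{0..1}. \<forall>u2\<in>{0..1}. CLEV L1 u1 u2 \<le> CLEV L2 u1 u2"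
    then show "le_loc (CLEV L1) (CLEV L2)" unfolding le_loc_def
      by (intro exI[of _ 1]) auto
  next
    assume "le_loc (CLEV L1) (CLEV L2)"
    then have "\<forall>w1\<ge>0. \<forall>w2\<ge>0. L1 w1 w2 \<le> L2 w1 w2" by (rule loc_imp_L[OF assms])
    then have "\<forall>u1\<in>{0..1}. \<forall>u2\<in>{0..1}. CEV L1 u1 u2 \<le> CEV L2 u1 u2"
      by (rule iffD1[OF L_iff_CEV])
    then show "\<forall>u1\<in>{0..1}. \<forall>u2\<in>{0..1}. CLEV L1 u1 u2 \<le> CLEV L2 u1 u2"
      by (rule iffD1[OF CEV_iff_CLEV])
  qed
qed

end
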